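(* Let $\epsilon>0$, $\beta\in(0,1)$, $\delta\in(0,1)$, and let $c:\mathbb{N}^2\times(0,1)\to\mathbb{R}_+$ (indexed by $\epsilon$ and phase indices $k_1,k_2$) be any family of threshold functions. If all rewards lie in $[0,1]$ (i.e. the potential-reward tables are in $([0,1]^K)^T$), then the algorithm AdaP-TT described in the context satisfies $\epsilon$-global DP.
   Context: Setting: $K$ arms; at each round $n$ the algorithm pulls $I_n\in[K]$ and observes reward $X_n$. $N_{n,a}=\sum_{t<n}\mathbf{1}\{I_t=a\}$. Laplace$(b)$ denotes the distribution with density $\frac{1}{2b}e^{-|x|/b}$. AdaP-TT (inputs $\beta,\delta,\epsilon$, thresholds $c_{\epsilon,k_1,k_2}$): In rounds $1,\dots,K$ pull each arm once. For each arm $a$ set phase index $k_a=1$, $T_1(a)=K+1$, $\tilde N_{1,a}=1$, $\tilde\mu_{1,a}=$ (initial reward of $a$) $+Y_{1,a}$ with $Y_{1,a}\sim$ Laplace$(1/\epsilon)$; $L_{n,a}$ = number of rounds $t<n$ with $B_t=a$; $N^a_{n,b}$ = number of rounds $t<n$ with $B_t=a$ and $I_t=b$. For each round $n>K$: (1) For every arm $a$ with $N_{n,a}\ge 2N_{T_{k_a}(a),a}$: set $k_a\leftarrow k_a+1$, $T_{k_a}(a)=n$, $\tilde N_{k_a,a}=N_{T_{k_a}(a),a}-N_{T_{k_a-1}(a),a}$, $\hat\mu_{k_a,a}=\tilde N_{k_a,a}^{-1}\sum_{s=T_{k_a-1}(a)}^{T_{k_a}(a)-1}X_s\mathbf{1}\{I_s=a\}$,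 and $\tilde\mu_{k_a,a}=\hat\mu_{k_a,a}+Y_{k_a,a}$ with fresh independent $Y_{k_a,a}\sim$ Laplace$(1/(\epsilon\tilde N_{k_a,a}))$. (2) $\hat a_n=\arg\max_b\tilde\mu_{k_b,b}$. (3) If for all $b\ne\hat a_n$, $\frac{(\tilde\mu_{k_{\hat a_n},\hat a_n}-\tilde\mu_{k_b,b})^2}{1/\tilde N_{k_{\hat a_n},\hat a_n}+1/\tilde N_{k_b,b}}\ge 2c_{\epsilon,k_{\hat a_n},k_b}(\tilde N_{k_{\hat a_n},\hat a_n},\tilde N_{k_b,b},\delta)$, stop and output recommendation $\hat a_n$ and stopping time $n$. (4) Leader $B_n=\arg\max_a\{\tilde\mu_{k_a,a}+\sqrt{k_a/\tilde N_{k_a,a}}+k_a/(\epsilon\tilde N_{k_a,a})\}$; challenger $C_n=\arg\min_{a\ne B_n}\frac{\tilde\mu_{k_{B_n},B_n}-\tilde\mu_{k_a,a}}{\sqrt{1/N_{n,B_n}+1/N_{n,a}}}$. (5) $I_n=B_n$ if $N^{B_n}_{n,B_n}\le\beta L_{n+1,B_n}$ (where $L_{n+1,B_n}=L_{n,B_n}+1$), else $I_n=C_n$; pull $I_n$, observe $X_n$, update counts. $\epsilon$-global DP: each user $t$ is a vector $\mathbf{x}_t\in\mathbb{R}^K$ of potential rewards and the reward observed at round $t$ is $x_{t,I_t}$. For a table $\underline{\mathbf{d}}^T=(\mathbf{x}_1,\dots,\mathbf{x}_T)$, let $\pi(\underline{a}^T,\hat a,T\mid\underline{\mathbf{d}}^T)$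 be the probability that the algorithm pulls exactly $a_1,\dots,a_T$, then stops and recommends $\hat a$. The algorithm is $\epsilon$-global DP if $\pi(\underline{a}^T,\hat a,T\mid\underline{\mathbf{d}}^T)\le e^\epsilon\pi(\underline{a}^T,\hat a,T\mid\underline{\mathbf{d}}'^T)$ for all $T$, all tables $\underline{\mathbf{d}}^T,\underline{\mathbf{d}}'^T$ differing in exactly one row, all $\underline{a}^T\in[K]^T$, $\hat a\in[K]$. *)

theory Defs
  imports "HOL-Probability.Probability"
begin

(* Arms are 0-indexed: arm a ranges over {0..<K} (paper's arm a+1).
   Rounds are 1-indexed.  A history h lists rounds 1..length h; entry t-1 is
   (I_t, X_t, B_t), where B_t = None for the initial rounds 1..K (no leader). *)
type_synonym hist = "(nat \<times> real \<times> nat option) list"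

definition arm_of :: "hist \<Rightarrow> nat \<Rightarrow> nat" where
  "arm_of h t = fst (h ! (t - 1))"
definition rew_of :: "hist \<Rightarrow> nat \<Rightarrow> real" where
  "rew_of h t = fst (snd (h ! (t - 1)))"
definition leader_of :: "hist \<Rightarrow> nat \<Rightarrow> nat option" where
  "leader_of h t = snd (snd (h ! (t - 1)))"

definition Ncnt :: "hist \<Rightarrow> nat \<Rightarrow> nat \<Rightarrow> nat" where
  "Ncnt h a n = card {t. 1 \<le> t \<and> t < n \<and> t \<le> length h \<and> arm_of h t = a}"
definition Lcnt :: "hist \<Rightarrow> nat \<Rightarrow> nat \<Rightarrow> nat" where
  "Lcnt h a n = card {t. 1 \<le> t \<and> t < n \<and> t \<le> length h \<and> leader_of h t = Some a}"
definition Lself :: "hist \<Rightarrow> nat \<Rightarrow> nat \<Rightarrow> nat" where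
  "Lself h a n = card {t. 1 \<le> t \<and> t < n \<and> t \<le> length h \<and> leader_of h t = Some a \<and> arm_of h t = a}"
definition rsum :: "hist \<Rightarrow> nat \<Rightarrow> nat \<Rightarrow> nat \<Rightarrow> real" where
  "rsum h a s1 s2 = (\<Sum>t\<in>{s1..<s2}. if arm_of h t = a then rew_of h t else 0)"

(* phase K h a j = (k_a, T_{k_a - 1}(a), T_{k_a}(a)) at round K+1+j, after step (1).
   (T_0 is a dummy value 0, never used.) *)
fun phase :: "nat \<Rightarrow> hist \<Rightarrow> nat \<Rightarrow> nat \<Rightarrow> nat \<times> nat \<times> nat" where
  "phase K h a 0 = (1, 0, K + 1)"
| "phase K h a (Suc j) =
     (let (k, sp, s) = phase K h a j; m = K + 2 + j in
      if Ncnt h a m \<ge> 2 * Ncnt h a s then (k + 1, s, m) else (k, sp, s))"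

definition Ntil :: "nat \<Rightarrow> hist \<Rightarrow> nat \<Rightarrow> nat \<Rightarrow> nat" where
  "Ntil K h a n = (let (k, sp, s) = phase K h a (n - (K + 1)) in
                   if k = 1 then 1 else Ncnt h a s - Ncnt h a sp)"

(* Laplace noise: omega (k,a) is a standard Laplace(1) variable; the noise added
   in phase k of arm a is Y_{k,a} = omega (k,a) / (eps * Ntilde_{k,a}) ~ Laplace(1/(eps*Ntilde)). *)
definition mutil :: "nat \<Rightarrow> real \<Rightarrow> (nat \<times> nat \<Rightarrow> real) \<Rightarrow> hist \<Rightarrow> nat \<Rightarrow> nat \<Rightarrow> real" where
  "mutil K eps \<omega> h a n = (let (k, sp, s) = phase K h a (n - (K + 1)); N = real (Ntil K h a n) in
      (if k = 1 then rew_of h (a + 1) else rsum h a sp s / N) + \<omega> (k, a) / (eps * N))"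

definition argmax_idx :: "nat \<Rightarrow> (nat \<Rightarrow> real) \<Rightarrow> nat" where
  "argmax_idx K f = (LEAST a. a < K \<and> (\<forall>b<K. f b \<le> f a))"

definition argmin_ne :: "nat \<Rightarrow> nat \<Rightarrow> (nat \<Rightarrow> real) \<Rightarrow> nat" where
  "argmin_ne K B f = (LEAST a. a < K \<and> a \<noteq> B \<and> (\<forall>b<K. b \<noteq> B \<longrightarrow> f a \<le> f b))"

datatype decision = Stop nat | Pull nat "nat option"

(* The decision of AdaP-TT at round n = length h + 1 given the history h of rounds 1..n-1.
   c eps k1 k2 N1 N2 delta stands for c_{eps,k1,k2}(N1,N2,delta). *)
definition decide :: "nat \<Rightarrow> real \<Rightarrow> real \<Rightarrow> real \<Rightarrow>
    (real \<Rightarrow> nat \<Rightarrow> nat \<Rightarrow> nat \<Rightarrow> nat \<Rightarrow> real \<Rightarrow> real) \<Rightarrow>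
    (nat \<times> nat \<Rightarrow> real) \<Rightarrow> hist \<Rightarrow> decision" where
  "decide K \<beta> \<delta> eps c \<omega> h =
    (let n = length h + 1 in
     if n \<le> K then Pull (n - 1) None
     else
       (let kk = (\<lambda>a. fst (phase K h a (n - (K + 1))));
            NN = (\<lambda>a. Ntil K h a n);
            mu = (\<lambda>a. mutil K eps \<omega> h a n);
            ah = argmax_idx K mu
        in if (\<forall>b<K. b \<noteq> ah \<longrightarrow>
                 (mu ah - mu b)\<^sup>2 / (1 / real (NN ah) + 1 / real (NN b))
                   \<ge> 2 * c eps (kk ah) (kk b) (NN ah) (NN b) \<delta>)
           then Stop ah
           else
             (let B = argmax_idx K (\<lambda>a. mu a + sqrt (real (kk a) / real (NN a))
                                        + real (kk a) / (eps * real (NN a)));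
                  C = argmin_ne K B (\<lambda>a. (mu B - mu a) /
                         sqrt (1 / real (Ncnt h B n) + 1 / real (Ncnt h a n)))
              in if real (Lself h B n) \<le> \<beta> * real (Lcnt h B n + 1)
                 then Pull B (Some B) else Pull C (Some B))))"

(* History of the run after n rounds on table d (d t a = potential reward of arm a for user t);
   if the algorithm has stopped, the history stays frozen (and is shorter than n). *)
fun run_hist :: "nat \<Rightarrow> real \<Rightarrow> real \<Rightarrow> real \<Rightarrow>
    (real \<Rightarrow> nat \<Rightarrow> nat \<Rightarrow> nat \<Rightarrow> nat \<Rightarrow> real \<Rightarrow> real) \<Rightarrow>
    (nat \<Rightarrow> nat \<Rightarrow> real) \<Rightarrow> (nat \<times> nat \<Rightarrow> real) \<Rightarrow> nat \<Rightarrow> hist" where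
  "run_hist K \<beta> \<delta> eps c d \<omega> 0 = []"
| "run_hist K \<beta> \<delta> eps c d \<omega> (Suc n) =
     (let h = run_hist K \<beta> \<delta> eps c d \<omega> n in
      if length h = n then
        (case decide K \<beta> \<delta> eps c \<omega> h of
           Stop _ \<Rightarrow> h
         | Pull i b \<Rightarrow> h @ [(i, d (n + 1) i, b)])
      else h)"

definition laplace :: "real \<Rightarrow> real measure" where
  "laplace b = density lborel (\<lambda>x. ennreal (exp (- \<bar>x\<bar> / b) / (2 * b)))"

definition noise_space :: "(nat \<times> nat \<Rightarrow> real) measure" where
  "noise_space = PiM UNIV (\<lambda>_. laplace 1)"

(* pi(a_1..a_T, ahat, T | d): the algorithm pulls exactly as in rounds 1..T and
   then, at round T+1, stops and recommends ahat. *)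
definition adap_pi :: "nat \<Rightarrow> real \<Rightarrow> real \<Rightarrow> real \<Rightarrow>
    (real \<Rightarrow> nat \<Rightarrow> nat \<Rightarrow> nat \<Rightarrow> nat \<Rightarrow> real \<Rightarrow> real) \<Rightarrow>
    (nat \<Rightarrow> nat \<Rightarrow> real) \<Rightarrow> nat \<Rightarrow> nat list \<Rightarrow> nat \<Rightarrow> real" where
  "adap_pi K \<beta> \<delta> eps c d T as ahat =
     measure noise_space
       {\<omega> \<in> space noise_space.
          let h = run_hist K \<beta> \<delta> eps c d \<omega> T in
          length h = T \<and> map fst h = as \<and> decide K \<beta> \<delta> eps c \<omega> h = Stop ahat}"

end

theory Submission
  imports Defs
begin

lemma phase_inv:
  "case phase K h a j of (k, sp, s) \<Rightarrow> 1 \<le> k \<and> K+1 \<le> s \<and> s \<le> K+1+j \<and>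
     (k = 1 \<longrightarrow> sp = 0 \<and> s = K+1) \<and> (k \<noteq> 1 \<longrightarrow> K+1 \<le> sp \<and> sp < s)"
proof (induction j)
  case 0 show ?case by simp
next
  case (Suc j)
  obtain k sp s where p: "phase K h a j = (k,sp,s)" by (cases "phase K h a j") auto
  with Suc show ?case by (auto simp: Let_def)
qed

lemma phase_step:
  "phase K h a (Suc j) = phase K h a j \<or>
   (fst (phase K h a (Suc j)) = fst (phase K h a j) + 1 \<and>
    fst (snd (phase K h a (Suc j))) = snd (snd (phase K h a j)) \<and>
    snd (snd (phase K h a (Suc j))) = K+2+j)"
proof -
  obtain k sp s where p: "phase K h a j = (k,sp,s)" by (cases "phase K h a j") auto
  then show ?thesis by (auto simp: Let_def)
qed

lemma phase_mono: "i \<le> j \<Longrightarrow> fst (phase K h a i) \<le> fst (phase K h a j)"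
proof (induction j)
  case 0 then show ?case by simp
next
  case (Suc j)
  show ?case
  proof (cases "i = Suc j")
    case False
    then have "fst (phase K h a i) \<le> fst (phase K h a j)" using Suc by simp
    then show ?thesis using phase_step[of K h a j] by auto
  qed simp
qed

lemma phase_D:
  "j0 \<le> j \<Longrightarrow> (fst (phase K h a j) = fst (phase K h a j0)) = (snd (snd (phase K h a j)) \<le> K+1+j0)"
proof (induction j)
  case 0 then show ?case using phase_inv[where K=K and h=h and a=a and j="0"] by simp
next
  case (Suc j)
  show ?case
  proof (cases "j0 = Suc j")
    case True then show ?thesis using phase_inv[where K=K and h=h and a=a and j="Suc j"] by (auto split: prod.splits)
  next
    case False
    then have j: "j0 \<le> j" using Suc by simp
    have m: "fst (phase K h a j0) \<le> fst (phase K h a j)" using phase_mono[OF j] .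
    from phase_step[of K h a j] show ?thesis
    proof
      assume "phase K h a (Suc j) = phase K h a j" then show ?thesis using Suc.IH[OF j] by simp
    next
      assume "fst (phase K h a (Suc j)) = fst (phase K h a j) + 1 \<and>
        fst (snd (phase K h a (Suc j))) = snd (snd (phase K h a j)) \<and>
        snd (snd (phase K h a (Suc j))) = K+2+j"
      then show ?thesis using m j by auto
    qed
  qed
qed

lemma phase_P:
  "(fst (phase K h a j) = fst (phase K h a j0) + 1) =
   (fst (phase K h a j) \<noteq> 1 \<and> fst (snd (phase K h a j)) \<le> K+1+j0 \<and> K+1+j0 < snd (snd (phase K h a j)))"
proof (induction j)
  case 0 then show ?case using phase_inv[where K=K and h=h and a=a and j="j0"] by (auto split: prod.splits)
next
  case (Suc j)
  from phase_step[of K h a j] show ?case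
  proof
    assume "phase K h a (Suc j) = phase K h a j" then show ?thesis using Suc.IH by simp
  next
    assume st: "fst (phase K h a (Suc j)) = fst (phase K h a j) + 1 \<and>
        fst (snd (phase K h a (Suc j))) = snd (snd (phase K h a j)) \<and>
        snd (snd (phase K h a (Suc j))) = K+2+j"
    show ?thesis
    proof (cases "j0 \<le> j")
      case True
      then show ?thesis using st phase_D[OF True, of K h a] phase_inv[where K=K and h=h and a=a and j="j0"] by (auto simp del: phase.simps split: prod.splits)
    next
      case False
      then have "fst (phase K h a (Suc j)) \<le> fst (phase K h a j0)" by (intro phase_mono) simp
      then show ?thesis using st False by auto
    qed
  qed
qed


lemma Ncnt_cong:
  assumes "length h \<le> length H" "m \<le> length h + 1"
    and "\<forall>t. 1 \<le> t \<and> t \<le> length h \<longrightarrow> arm_of h t = arm_of H t"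
  shows "Ncnt h a m = Ncnt H a m"
proof -
  have "{t. 1 \<le> t \<and> t < m \<and> t \<le> length h \<and> arm_of h t = a} =
        {t. 1 \<le> t \<and> t < m \<and> t \<le> length H \<and> arm_of H t = a}"
    using assms by auto
  then show ?thesis unfolding Ncnt_def by simp
qed

lemma phase_transfer:
  assumes "length h \<le> length H"
    and "\<forall>t. 1 \<le> t \<and> t \<le> length h \<longrightarrow> arm_of h t = arm_of H t"
  shows "K+1+j \<le> length h + 1 \<Longrightarrow> phase K h a j = phase K H a j"
proof (induction j)
  case 0 then show ?case by simp
next
  case (Suc j)
  then have IH: "phase K h a j = phase K H a j" by simp
  obtain k sp s where p: "phase K h a j = (k,sp,s)" by (cases "phase K h a j") auto
  have "s \<le> K+1+j" using phase_inv[where K=K and h=h and a=a and j=j] p by simp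
  then have e1: "Ncnt h a s = Ncnt H a s" using Suc.prems assms by (intro Ncnt_cong) auto
  have e2: "Ncnt h a (K+2+j) = Ncnt H a (K+2+j)" using Suc.prems assms by (intro Ncnt_cong) auto
  show ?case using p IH e1 e2 by (simp add: Let_def)
qed

lemma Ncnt_map: "map fst h = map fst h' \<Longrightarrow> Ncnt h a m = Ncnt h' a m"
proof -
  assume e: "map fst h = map fst h'"
  then have l: "length h = length h'" by (metis length_map)
  have "\<forall>t. 1 \<le> t \<and> t \<le> length h \<longrightarrow> arm_of h t = arm_of h' t"
  proof (intro allI impI)
    fix t assume "1 \<le> t \<and> t \<le> length h"
    then have "t - 1 < length h" by linarith
    then have "map fst h ! (t-1) = map fst h' ! (t-1)" using e by simp
    then show "arm_of h t = arm_of h' t" using \<open>t - 1 < length h\<close> l by (simp add: arm_of_def)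
  qed
  note F = this
  have "{t. 1 \<le> t \<and> t < m \<and> t \<le> length h \<and> arm_of h t = a} =
        {t. 1 \<le> t \<and> t < m \<and> t \<le> length h' \<and> arm_of h' t = a}"
  proof (rule Collect_cong)
    fix t show "(1 \<le> t \<and> t < m \<and> t \<le> length h \<and> arm_of h t = a) =
        (1 \<le> t \<and> t < m \<and> t \<le> length h' \<and> arm_of h' t = a)"
      using F[rule_format, of t] l by (cases "1 \<le> t \<and> t \<le> length h") auto
  qed
  then show ?thesis unfolding Ncnt_def by simp
qed

lemma Ncnt_map': "map fst h = map fst h' \<Longrightarrow> Ncnt h = Ncnt h'"
  by (intro ext) (rule Ncnt_map)

lemma phase_map: "map fst h = map fst h' \<Longrightarrow> phase K h a j = phase K h' a j"
proof -
  assume e: "map fst h = map fst h'"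
  have "phase K h a j = phase K h' a j" for j
    by (induction j) (simp_all add: Ncnt_map'[OF e])
  then show ?thesis .
qed

lemma Ntil_map: "map fst h = map fst h' \<Longrightarrow> Ntil K h a n = Ntil K h' a n"
  by (simp only: Ntil_def phase_map[of h h'] Ncnt_map'[of h h'])

definition skel :: "hist \<Rightarrow> (nat \<times> nat option) list" where
  "skel h = map (\<lambda>x. (fst x, snd (snd x))) h"

lemma skel_map_fst: "skel h = skel h' \<Longrightarrow> map fst h = map fst h'"
proof -
  assume "skel h = skel h'"
  then have "map fst (skel h) = map fst (skel h')" by simp
  then show ?thesis by (simp add: skel_def comp_def)
qed

lemma skel_nth: "skel h = skel h' \<Longrightarrow> i < length h \<Longrightarrow>
   fst (h ! i) = fst (h' ! i) \<and> snd (snd (h ! i)) = snd (snd (h' ! i))"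
proof -
  assume e: "skel h = skel h'" and i: "i < length h"
  have l: "length h = length h'" using arg_cong[OF e, of length] by (simp add: skel_def)
  have "skel h ! i = skel h' ! i" using e by simp
  then show ?thesis using i l by (simp add: skel_def)
qed

lemma Lcnt_skel: "skel h = skel h' \<Longrightarrow> Lcnt h a n = Lcnt h' a n"
proof -
  assume e: "skel h = skel h'"
  have l: "length h = length h'" using arg_cong[OF e, of length] by (simp add: skel_def)
  have "\<And>t. 1 \<le> t \<Longrightarrow> t \<le> length h \<Longrightarrow> leader_of h t = leader_of h' t"
  proof -
    fix t assume "1 \<le> t" "t \<le> length h"
    then have "t - 1 < length h" by linarith
    from skel_nth[OF e this] show "leader_of h t = leader_of h' t" by (simp add: leader_of_def)
  qed
  note F = this
  have "{t. 1 \<le> t \<and> t < n \<and> t \<le> length h \<and> leader_of h t = Some a} =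
     {t. 1 \<le> t \<and> t < n \<and> t \<le> length h' \<and> leader_of h' t = Some a}"
  proof (rule Collect_cong)
    fix t show "(1 \<le> t \<and> t < n \<and> t \<le> length h \<and> leader_of h t = Some a) =
     (1 \<le> t \<and> t < n \<and> t \<le> length h' \<and> leader_of h' t = Some a)"
      using F[of t] l by (cases "1 \<le> t \<and> t \<le> length h") auto
  qed
  then show ?thesis unfolding Lcnt_def by simp
qed

lemma Lself_skel: "skel h = skel h' \<Longrightarrow> Lself h a n = Lself h' a n"
proof -
  assume e: "skel h = skel h'"
  have l: "length h = length h'" using arg_cong[OF e, of length] by (simp add: skel_def)
  have "\<And>t. 1 \<le> t \<Longrightarrow> t \<le> length h \<Longrightarrow> leader_of h t = leader_of h' t \<and> arm_of h t = arm_of h' t"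
  proof -
    fix t assume "1 \<le> t" "t \<le> length h"
    then have "t - 1 < length h" by linarith
    from skel_nth[OF e this] show "leader_of h t = leader_of h' t \<and> arm_of h t = arm_of h' t"
      by (simp add: leader_of_def arm_of_def)
  qed
  note F = this
  have "{t. 1 \<le> t \<and> t < n \<and> t \<le> length h \<and> leader_of h t = Some a \<and> arm_of h t = a} =
     {t. 1 \<le> t \<and> t < n \<and> t \<le> length h' \<and> leader_of h' t = Some a \<and> arm_of h' t = a}"
  proof (rule Collect_cong)
    fix t show "(1 \<le> t \<and> t < n \<and> t \<le> length h \<and> leader_of h t = Some a \<and> arm_of h t = a) =
     (1 \<le> t \<and> t < n \<and> t \<le> length h' \<and> leader_of h' t = Some a \<and> arm_of h' t = a)"
      using F[of t] l by (cases "1 \<le> t \<and> t \<le> length h") auto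
  qed
  then show ?thesis unfolding Lself_def by simp
qed

lemma run_len: "length (run_hist K \<beta> \<delta> eps c d \<omega> n) \<le> n"
  by (induction n) (auto simp: Let_def split: decision.splits)

lemma run_rew: "i < length (run_hist K \<beta> \<delta> eps c d \<omega> n) \<Longrightarrow>
  fst (snd (run_hist K \<beta> \<delta> eps c d \<omega> n ! i)) = d (i+1) (fst (run_hist K \<beta> \<delta> eps c d \<omega> n ! i))"
proof (induction n arbitrary: i)
  case 0 then show ?case by simp
next
  case (Suc n)
  show ?case
  proof (cases "length (run_hist K \<beta> \<delta> eps c d \<omega> n) = n")
    case True
    show ?thesis
    proof (cases "decide K \<beta> \<delta> eps c \<omega> (run_hist K \<beta> \<delta> eps c d \<omega> n)")
      case (Stop x)
      then show ?thesis using True Suc by (simp add: Let_def)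
    next
      case (Pull x b)
      show ?thesis
      proof (cases "i < n")
        case True2: True
        then show ?thesis using True Suc Pull by (simp add: Let_def nth_append)
      next
        case False
        then have "i = n" using Suc.prems True Pull by (simp add: Let_def)
        then show ?thesis using True Suc Pull by (simp add: Let_def nth_append)
      qed
    qed
  next
    case False
    then show ?thesis using Suc by (simp add: Let_def)
  qed
qed

lemma decide_init: "length h < K \<Longrightarrow> decide K \<beta> \<delta> eps c \<omega> h = Pull (length h) None"
  unfolding decide_def Let_def[of "length h + 1"] by (subst if_P) auto

lemma run_init: "i < length (run_hist K \<beta> \<delta> eps c d \<omega> n) \<Longrightarrow> i < K \<Longrightarrow>
  fst (run_hist K \<beta> \<delta> eps c d \<omega> n ! i) = i"
proof (induction n arbitrary: i)
  case 0 then show ?case by simp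
next
  case (Suc n)
  show ?case
  proof (cases "length (run_hist K \<beta> \<delta> eps c d \<omega> n) = n")
    case True
    show ?thesis
    proof (cases "decide K \<beta> \<delta> eps c \<omega> (run_hist K \<beta> \<delta> eps c d \<omega> n)")
      case (Stop x)
      then show ?thesis using True Suc by (simp add: Let_def)
    next
      case (Pull x b)
      show ?thesis
      proof (cases "i < n")
        case True2: True
        then show ?thesis using True Suc Pull by (simp add: Let_def nth_append)
      next
        case False
        then have i: "i = n" using Suc.prems True Pull by (simp add: Let_def)
        then have "n < K" using Suc.prems by simp
        then have "decide K \<beta> \<delta> eps c \<omega> (run_hist K \<beta> \<delta> eps c d \<omega> n) = Pull n None"
          using decide_init[of "run_hist K \<beta> \<delta> eps c d \<omega> n" K \<beta> \<delta> eps c \<omega>] True by simp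
        then show ?thesis using True Suc Pull i by (simp add: Let_def nth_append)
      qed
    qed
  next
    case False
    then show ?thesis using Suc by (simp add: Let_def)
  qed
qed

lemma run_Suc:
  assumes "length (run_hist K \<beta> \<delta> eps c d \<omega> (Suc n)) = Suc n"
  shows "length (run_hist K \<beta> \<delta> eps c d \<omega> n) = n \<and>
    (\<exists>i b. decide K \<beta> \<delta> eps c \<omega> (run_hist K \<beta> \<delta> eps c d \<omega> n) = Pull i b \<and>
       run_hist K \<beta> \<delta> eps c d \<omega> (Suc n) = run_hist K \<beta> \<delta> eps c d \<omega> n @ [(i, d (n+1) i, b)])"
proof (cases "length (run_hist K \<beta> \<delta> eps c d \<omega> n) = n")
  case True
  show ?thesis
  proof (cases "decide K \<beta> \<delta> eps c \<omega> (run_hist K \<beta> \<delta> eps c d \<omega> n)")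
    case (Stop x)
    then have False using True assms by (simp add: Let_def)
    then show ?thesis ..
  next
    case (Pull x b)
    then show ?thesis using True by (simp add: Let_def)
  qed
next
  case False
  then have False using assms run_len[of K \<beta> \<delta> eps c d \<omega> n] by (simp add: Let_def)
  then show ?thesis ..
qed


definition dgen :: "nat \<Rightarrow> real \<Rightarrow> real \<Rightarrow> real \<Rightarrow>
    (real \<Rightarrow> nat \<Rightarrow> nat \<Rightarrow> nat \<Rightarrow> nat \<Rightarrow> real \<Rightarrow> real) \<Rightarrow> nat \<Rightarrow>
    (nat \<Rightarrow> nat) \<Rightarrow> (nat \<Rightarrow> nat) \<Rightarrow> (nat \<Rightarrow> real) \<Rightarrow> (nat \<Rightarrow> nat) \<Rightarrow> (nat \<Rightarrow> nat) \<Rightarrow> (nat \<Rightarrow> nat) \<Rightarrow> decision" where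
  "dgen K \<beta> \<delta> eps c n kk NN mu Nc Ls Lc =
     (if n \<le> K then Pull (n - 1) None
       else
       (let ah = argmax_idx K mu
        in if (\<forall>b<K. b \<noteq> ah \<longrightarrow>
                 (mu ah - mu b)\<^sup>2 / (1 / real (NN ah) + 1 / real (NN b))
                   \<ge> 2 * c eps (kk ah) (kk b) (NN ah) (NN b) \<delta>)
           then Stop ah
           else
             (let B = argmax_idx K (\<lambda>a. mu a + sqrt (real (kk a) / real (NN a))
                                        + real (kk a) / (eps * real (NN a)));
                  C = argmin_ne K B (\<lambda>a. (mu B - mu a) /
                         sqrt (1 / real (Nc B) + 1 / real (Nc a)))
              in if real (Ls B) \<le> \<beta> * real (Lc B + 1)
                 then Pull B (Some B) else Pull C (Some B))))"

lemma decide_dgen: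
  "decide K \<beta> \<delta> eps c \<omega> h = dgen K \<beta> \<delta> eps c (length h + 1)
     (\<lambda>a. fst (phase K h a (length h + 1 - (K + 1)))) (\<lambda>a. Ntil K h a (length h + 1))
     (\<lambda>a. mutil K eps \<omega> h a (length h + 1)) (\<lambda>a. Ncnt h a (length h + 1))
     (\<lambda>a. Lself h a (length h + 1)) (\<lambda>a. Lcnt h a (length h + 1))"
  unfolding decide_def dgen_def Let_def by (rule refl)

lemma argmax_cong: "\<forall>a<K. f a = g a \<Longrightarrow> argmax_idx K f = argmax_idx K g"
proof -
  assume e: "\<forall>a<K. f a = g a"
  have "\<And>a. (a < K \<and> (\<forall>b<K. f b \<le> f a)) = (a < K \<and> (\<forall>b<K. g b \<le> g a))"
    using e by auto
  then show ?thesis unfolding argmax_idx_def by simp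
qed

lemma argmin_cong: "\<forall>a<K. f a = g a \<Longrightarrow> argmin_ne K B f = argmin_ne K B g"
proof -
  assume e: "\<forall>a<K. f a = g a"
  have "\<And>a. (a < K \<and> a \<noteq> B \<and> (\<forall>b<K. b \<noteq> B \<longrightarrow> f a \<le> f b)) =
             (a < K \<and> a \<noteq> B \<and> (\<forall>b<K. b \<noteq> B \<longrightarrow> g a \<le> g b))"
    using e by auto
  then show ?thesis unfolding argmin_ne_def by simp
qed

lemma argmax_lt: assumes "0 < K" shows "argmax_idx K f < K"
proof -
  have fin: "finite (f ` {..<K})" "f ` {..<K} \<noteq> {}" using assms by auto
  then have "Max (f ` {..<K}) \<in> f ` {..<K}" by (rule Max_in)
  then obtain a where a: "a < K" "f a = Max (f ` {..<K})" by auto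
  have "\<forall>b<K. f b \<le> f a" using a fin by auto
  then have "\<exists>a. a < K \<and> (\<forall>b<K. f b \<le> f a)" using a by blast
  then show ?thesis unfolding argmax_idx_def by (rule LeastI2_ex) simp
qed

lemma dgen_cong:
  assumes "0 < K" "\<forall>a<K. mu a = mu' a"
  shows "dgen K \<beta> \<delta> eps c n kk NN mu Nc Ls Lc = dgen K \<beta> \<delta> eps c n kk NN mu' Nc Ls Lc"
proof -
  have ahE: "argmax_idx K mu' = argmax_idx K mu" using assms(2) by (intro argmax_cong) simp
  have ahK: "argmax_idx K mu < K" using assms(1) by (rule argmax_lt)
  have BE: "argmax_idx K (\<lambda>a. mu' a + sqrt (real (kk a) / real (NN a)) + real (kk a) / (eps * real (NN a)))
     = argmax_idx K (\<lambda>a. mu a + sqrt (real (kk a) / real (NN a)) + real (kk a) / (eps * real (NN a)))"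
    using assms(2) by (intro argmax_cong) simp
  have BK: "argmax_idx K (\<lambda>a. mu a + sqrt (real (kk a) / real (NN a)) + real (kk a) / (eps * real (NN a))) < K"
    using assms(1) by (rule argmax_lt)
  have CE: "argmin_ne K B (\<lambda>a. (mu' B - mu' a) / sqrt (1 / real (Nc B) + 1 / real (Nc a))) =
           argmin_ne K B (\<lambda>a. (mu B - mu a) / sqrt (1 / real (Nc B) + 1 / real (Nc a)))"
    if "B < K" for B
    using assms(2) that by (intro argmin_cong) simp
  have SE: "(\<forall>b<K. b \<noteq> ah \<longrightarrow>
                 (mu' ah - mu' b)\<^sup>2 / (1 / real (NN ah) + 1 / real (NN b))
                   \<ge> 2 * c eps (kk ah) (kk b) (NN ah) (NN b) \<delta>) =
           (\<forall>b<K. b \<noteq> ah \<longrightarrow>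
                 (mu ah - mu b)\<^sup>2 / (1 / real (NN ah) + 1 / real (NN b))
                   \<ge> 2 * c eps (kk ah) (kk b) (NN ah) (NN b) \<delta>)" if "ah < K" for ah
    using assms(2) that by auto
  show ?thesis
    unfolding dgen_def Let_def ahE BE CE[OF BK] SE[OF ahK] by (rule refl)
qed


definition Hof :: "nat list \<Rightarrow> hist" where
  "Hof as = map (\<lambda>i. (i, 0, None)) as"

definition k0_of :: "nat \<Rightarrow> nat list \<Rightarrow> nat \<Rightarrow> nat" where
  "k0_of K as t0 = (if t0 \<le> K then 1 else fst (phase K (Hof as) (as ! (t0 - 1)) (t0 - (K + 1))) + 1)"

definition shiftw :: "nat \<Rightarrow> real \<Rightarrow> nat list \<Rightarrow> nat \<Rightarrow> (nat \<Rightarrow> nat \<Rightarrow> real) \<Rightarrow> (nat \<Rightarrow> nat \<Rightarrow> real)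
   \<Rightarrow> (nat \<times> nat \<Rightarrow> real) \<Rightarrow> (nat \<times> nat \<Rightarrow> real)" where
  "shiftw K eps as t0 d d' \<omega> = fun_upd \<omega> (k0_of K as t0, as ! (t0 - 1))
      (\<omega> (k0_of K as t0, as ! (t0 - 1)) + eps * (d t0 (as ! (t0 - 1)) - d' t0 (as ! (t0 - 1))))"

lemma aux_field:
  fixes e R D N w :: real
  assumes "e > 0"
  shows "(R - D) / N + (w + e * D) / (e * N) = R / N + w / (e * N)"
proof -
  have "(w + e * D) / (e * N) = w / (e * N) + D / N"
    using assms by (simp add: add_divide_distrib)
  moreover have "(R - D) / N = R / N - D / N" by (simp add: diff_divide_distrib)
  ultimately show ?thesis by simp
qed

lemma mutil_sim:
  fixes h h' :: hist
  assumes eps: "eps > 0" and K0: "0 < K" and asK: "set as \<subseteq> {..<K}" and las: "length as = T"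
    and t0: "t0 \<in> {1..T}"
    and rows: "\<forall>t\<in>{1..T}. t \<noteq> t0 \<longrightarrow> (\<forall>a<K. d t a = d' t a)"
    and sk: "skel h = skel h'" and lh: "length h \<le> T" and Kh: "K \<le> length h"
    and mf: "map fst h = take (length h) as"
    and rw: "\<forall>i<length h. fst (snd (h ! i)) = d (i+1) (fst (h ! i))"
    and rw': "\<forall>i<length h'. fst (snd (h' ! i)) = d' (i+1) (fst (h' ! i))"
    and ini: "\<forall>i<length h. i < K \<longrightarrow> fst (h ! i) = i"
    and a: "a < K"
  shows "mutil K eps \<omega> h a (length h + 1) = mutil K eps (shiftw K eps as t0 d d' \<omega>) h' a (length h + 1)"
proof -
  define L where "L = length h"
  define n where "n = L + 1"
  define j where "j = n - (K + 1)"
  define H where "H = Hof as"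
  define a0 where "a0 = as ! (t0 - 1)"
  define k0 where "k0 = k0_of K as t0"
  define \<Delta> where "\<Delta> = d t0 a0 - d' t0 a0"
  define \<omega>' where "\<omega>' = shiftw K eps as t0 d d' \<omega>"
  have \<omega>'k: "\<omega>' x = \<omega> x + (if x = (k0, a0) then eps * \<Delta> else 0)" for x
    unfolding \<omega>'_def shiftw_def k0_def a0_def \<Delta>_def by simp
  have mf': "map fst h' = map fst h" using skel_map_fst[OF sk] by simp
  have lh': "length h' = L" unfolding L_def using arg_cong[OF mf', of length] by simp
  have Knj: "K + 1 + j = n" unfolding j_def n_def L_def using Kh by simp
  have arms: "arm_of h t = as ! (t - 1)" if "1 \<le> t" "t \<le> L" for t
  proof -
    have "t - 1 < L" using that by linarith
    then have "map fst h ! (t - 1) = as ! (t - 1)" using mf unfolding L_def by simp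
    then show ?thesis using \<open>t - 1 < L\<close> unfolding arm_of_def L_def by simp
  qed
  have arms': "arm_of h' t = as ! (t - 1)" if "1 \<le> t" "t \<le> L" for t
  proof -
    have "t - 1 < L" using that by linarith
    then have "map fst h' ! (t - 1) = as ! (t - 1)" using mf mf' unfolding L_def by simp
    then show ?thesis using \<open>t - 1 < L\<close> lh' unfolding arm_of_def by simp
  qed
  have rews: "rew_of h t = d t (as ! (t - 1))" if "1 \<le> t" "t \<le> L" for t
  proof -
    have "t - 1 < L" using that by linarith
    then have "fst (snd (h ! (t - 1))) = d t (fst (h ! (t - 1)))" using rw that unfolding L_def by auto
    then show ?thesis using arms[OF that] unfolding rew_of_def arm_of_def by simp
  qed
  have rews': "rew_of h' t = d' t (as ! (t - 1))" if "1 \<le> t" "t \<le> L" for t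
  proof -
    have "t - 1 < L" using that by linarith
    then have "fst (snd (h' ! (t - 1))) = d' t (fst (h' ! (t - 1)))" using rw' that lh' by auto
    then show ?thesis using arms'[OF that] unfolding rew_of_def arm_of_def by simp
  qed
  have asi: "as ! i = i" if "i < K" for i
  proof -
    have "i < L" using that Kh unfolding L_def by simp
    then have "fst (h ! i) = i" using ini that unfolding L_def by simp
    moreover have "map fst h ! i = as ! i" using mf \<open>i < L\<close> unfolding L_def by simp
    ultimately show ?thesis using \<open>i < L\<close> unfolding L_def by simp
  qed
  have LT: "L \<le> T" using lh unfolding L_def .
  have armsH: "arm_of H t = as ! (t - 1)" if "1 \<le> t" "t \<le> T" for t
  proof -
    have "t - 1 < T" using that by linarith
    then show ?thesis unfolding arm_of_def H_def Hof_def using las by simp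
  qed
  have phE: "phase K h a j = phase K H a j"
  proof (rule phase_transfer)
    show "length h \<le> length H" using lh las unfolding H_def Hof_def by simp
    show "\<forall>t. 1 \<le> t \<and> t \<le> length h \<longrightarrow> arm_of h t = arm_of H t"
      using arms armsH LT unfolding L_def by auto
    show "K + 1 + j \<le> length h + 1" using Knj unfolding n_def L_def by simp
  qed
  have phE': "phase K h' a j = phase K H a j" using phE phase_map[OF mf'] by simp
  have NtE': "Ntil K h' a n = Ntil K h a n" using Ntil_map[OF mf'] by simp
  obtain k sp s where p: "phase K H a j = (k, sp, s)" by (cases "phase K H a j") auto
  have inv: "1 \<le> k \<and> K+1 \<le> s \<and> s \<le> n \<and> (k = 1 \<longrightarrow> sp = 0 \<and> s = K+1) \<and> (k \<noteq> 1 \<longrightarrow> K+1 \<le> sp \<and> sp < s)"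
    using phase_inv[where K=K and h=H and a=a and j=j] p Knj by simp
  define N where "N = Ntil K h a n"
  have M1: "mutil K eps \<omega> h a n = (if k = 1 then rew_of h (a+1) else rsum h a sp s / real N) + \<omega> (k,a) / (eps * real N)"
    unfolding mutil_def N_def j_def[symmetric] phE p by (simp add: Let_def)
  have M2: "mutil K eps \<omega>' h' a n = (if k = 1 then rew_of h' (a+1) else rsum h' a sp s / real N) + \<omega>' (k,a) / (eps * real N)"
    unfolding mutil_def N_def j_def[symmetric] phE' p NtE'[symmetric] by (simp add: Let_def)
  have t0T: "1 \<le> t0" "t0 \<le> T" using t0 by auto
  show ?thesis
    unfolding L_def[symmetric] n_def[symmetric] \<omega>'_def[symmetric] M1 M2
  proof (cases "k = 1")
    case True
    have N1: "N = 1" unfolding N_def Ntil_def j_def[symmetric] phE p using True by simp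
    have aL: "1 \<le> a + 1" "a + 1 \<le> L" using a Kh unfolding L_def by auto
    have r1: "rew_of h (a+1) = d (a+1) a" using rews[OF aL] asi[OF a] by simp
    have r2: "rew_of h' (a+1) = d' (a+1) a" using rews'[OF aL] asi[OF a] by simp
    show "(if k = 1 then rew_of h (a + 1) else rsum h a sp s / real N) + \<omega> (k, a) / (eps * real N) =
      (if k = 1 then rew_of h' (a + 1) else rsum h' a sp s / real N) + \<omega>' (k, a) / (eps * real N)"
    proof (cases "(k, a) = (k0, a0)")
      case True2: True
      then have k01: "k0 = 1" using True by simp
      have tK: "t0 \<le> K"
      proof (rule ccontr)
        assume "\<not> t0 \<le> K"
        then have "k0 = fst (phase K (Hof as) (as ! (t0 - 1)) (t0 - (K + 1))) + 1"
          unfolding k0_def k0_of_def by simp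
        moreover have "1 \<le> fst (phase K (Hof as) (as ! (t0 - 1)) (t0 - (K + 1)))"
          using phase_inv[where K=K and h="Hof as" and a="as ! (t0 - 1)" and j="t0 - (K + 1)"]
          by (simp split: prod.splits)
        ultimately show False using k01 by simp
      qed
      have "a0 = t0 - 1" unfolding a0_def using asi[of "t0 - 1"] tK t0T by simp
      then have at: "a + 1 = t0" using True2 t0T by simp
      have aa: "a = a0" using True2 by simp
      have w: "\<omega>' (k, a) = \<omega> (k, a) + eps * (d t0 a - d' t0 a)"
        using \<omega>'k[of "(k,a)"] True2 aa unfolding \<Delta>_def by simp
      have r1': "rew_of h (a+1) = d t0 a" using r1 at by simp
      have r2': "rew_of h' (a+1) = d' t0 a" using r2 at by simp
      show ?thesis unfolding w r1' r2' N1 using True eps by (simp add: field_simps)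
    next
      case False
      have "d (a+1) a = d' (a+1) a"
      proof (cases "a + 1 = t0")
        case True3: True
        then have "t0 \<le> K" using a by simp
        then have "k0 = 1" unfolding k0_def k0_of_def by simp
        moreover have "a0 = a" unfolding a0_def using True3 asi[OF a] by (metis add_diff_cancel_right')
        ultimately show ?thesis using False True by simp
      next
        case False3: False
        then show ?thesis using rows aL LT a by auto
      qed
      moreover have "\<omega>' (k, a) = \<omega> (k, a)" using \<omega>'k[of "(k,a)"] False by auto
      ultimately show ?thesis using True N1 r1 r2 by simp
    qed
  next
    case False
    have sp1: "K + 1 \<le> sp" "sp < s" "s \<le> n" using inv False by auto
    have win: "t \<in> {sp..<s} \<Longrightarrow> 1 \<le> t \<and> t \<le> L" for t using sp1 unfolding n_def by auto
    have tdiff: "(if arm_of h t = a then rew_of h t else 0) - (if arm_of h' t = a then rew_of h' t else 0)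
        = (if t = t0 then (if a = a0 then \<Delta> else 0) else 0)" if "t \<in> {sp..<s}" for t
    proof -
      have tt: "1 \<le> t" "t \<le> L" using win[OF that] by auto
      show ?thesis
      proof (cases "t = t0")
        case True
        then show ?thesis using arms[OF tt] arms'[OF tt] rews[OF tt] rews'[OF tt]
          unfolding \<Delta>_def a0_def by auto
      next
        case False
        have "t \<in> {1..T}" using tt LT by simp
        moreover have "as ! (t - 1) < K"
        proof -
          have "t - 1 < length as" using tt LT las by linarith
          then have "as ! (t - 1) \<in> set as" by simp
          then show ?thesis using asK by auto
        qed
        ultimately have "d t (as ! (t - 1)) = d' t (as ! (t - 1))" using rows False by auto
        then show ?thesis using arms[OF tt] arms'[OF tt] rews[OF tt] rews'[OF tt] False by auto
      qed
    qed
    have rdiff: "rsum h a sp s - rsum h' a sp s = (if t0 \<in> {sp..<s} then (if a = a0 then \<Delta> else 0) else 0)"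
    proof -
      have "rsum h a sp s - rsum h' a sp s = (\<Sum>t\<in>{sp..<s}. (if arm_of h t = a then rew_of h t else 0) - (if arm_of h' t = a then rew_of h' t else 0))"
        unfolding rsum_def by (simp add: sum_subtractf)
      also have "\<dots> = (\<Sum>t\<in>{sp..<s}. (if t = t0 then (if a = a0 then \<Delta> else 0) else 0))"
        using tdiff by (intro sum.cong) auto
      also have "\<dots> = (if t0 \<in> {sp..<s} then (if a = a0 then \<Delta> else 0) else 0)"
        by (simp add: sum.delta')
      finally show ?thesis .
    qed
    have keq: "((k, a) = (k0, a0)) = (a = a0 \<and> t0 \<in> {sp..<s})"
    proof (cases "t0 \<le> K")
      case True
      then have "k0 = 1" unfolding k0_def k0_of_def by simp
      then show ?thesis using False sp1 True by auto
    next
      case tK: False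
      have K1: "K + 1 + (t0 - (K + 1)) = t0" using tK by simp
      have k0e: "k0 = fst (phase K H a0 (t0 - (K + 1))) + 1"
        unfolding k0_def k0_of_def H_def a0_def using tK by simp
      show ?thesis
      proof (cases "a = a0")
        case True
        have "(fst (phase K H a j) = fst (phase K H a (t0 - (K + 1))) + 1) =
           (fst (phase K H a j) \<noteq> 1 \<and> fst (snd (phase K H a j)) \<le> K + 1 + (t0 - (K + 1)) \<and>
            K + 1 + (t0 - (K + 1)) < snd (snd (phase K H a j)))"
          by (rule phase_P)
        then show ?thesis using True p k0e K1 False by auto
      qed simp
    qed
    show "(if k = 1 then rew_of h (a + 1) else rsum h a sp s / real N) + \<omega> (k, a) / (eps * real N) =
      (if k = 1 then rew_of h' (a + 1) else rsum h' a sp s / real N) + \<omega>' (k, a) / (eps * real N)"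
    proof (cases "(k, a) = (k0, a0)")
      case True
      then have "rsum h' a sp s = rsum h a sp s - \<Delta>" using rdiff keq by auto
      moreover have "\<omega>' (k, a) = \<omega> (k, a) + eps * \<Delta>" using \<omega>'k True by simp
      ultimately show ?thesis using False eps aux_field[of eps "rsum h a sp s" \<Delta> "real N" "\<omega> (k, a)"]
        by simp
    next
      case F2: False
      then have nc: "\<not> (a = a0 \<and> t0 \<in> {sp..<s})" using keq by blast
      have "rsum h a sp s - rsum h' a sp s = 0" unfolding rdiff using nc by auto
      then have "rsum h' a sp s = rsum h a sp s" by simp
      moreover have "\<omega>' (k, a) = \<omega> (k, a)" using \<omega>'k[of "(k,a)"] F2 by auto
      ultimately show ?thesis using False by simp
    qed
  qed
qed


lemma decide_sim:
  fixes h h' :: hist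
  assumes eps: "eps > 0" and K0: "0 < K" and asK: "set as \<subseteq> {..<K}" and las: "length as = T"
    and t0: "t0 \<in> {1..T}"
    and rows: "\<forall>t\<in>{1..T}. t \<noteq> t0 \<longrightarrow> (\<forall>a<K. d t a = d' t a)"
    and sk: "skel h = skel h'" and lh: "length h \<le> T"
    and mf: "map fst h = take (length h) as"
    and rw: "\<forall>i<length h. fst (snd (h ! i)) = d (i+1) (fst (h ! i))"
    and rw': "\<forall>i<length h'. fst (snd (h' ! i)) = d' (i+1) (fst (h' ! i))"
    and ini: "\<forall>i<length h. i < K \<longrightarrow> fst (h ! i) = i"
  shows "decide K \<beta> \<delta> eps c \<omega> h = decide K \<beta> \<delta> eps c (shiftw K eps as t0 d d' \<omega>) h'"
proof -
  have mf': "map fst h' = map fst h" using skel_map_fst[OF sk] by simp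
  have lh': "length h' = length h" using arg_cong[OF mf', of length] by simp
  show ?thesis
  proof (cases "length h < K")
    case True
    then show ?thesis using decide_init[of h K] decide_init[of h' K] lh' by simp
  next
    case False
    then have Kh: "K \<le> length h" by simp
    have mu: "\<forall>a<K. mutil K eps \<omega> h a (length h + 1) =
                     mutil K eps (shiftw K eps as t0 d d' \<omega>) h' a (length h + 1)"
      using mutil_sim[OF eps K0 asK las t0 rows sk lh Kh mf rw rw' ini] by blast
    have e1: "phase K h' = phase K h" using phase_map[OF mf'] by (intro ext) simp
    have e2: "Ntil K h' = Ntil K h" using Ntil_map[OF mf'] by (intro ext) simp
    have e3: "Ncnt h' = Ncnt h" using Ncnt_map'[OF mf'] .
    have e4: "Lself h' = Lself h" using Lself_skel[OF sk] by (intro ext) simp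
    have e5: "Lcnt h' = Lcnt h" using Lcnt_skel[OF sk] by (intro ext) simp
    show ?thesis
      unfolding decide_dgen[of K \<beta> \<delta> eps c \<omega> h] decide_dgen[of K \<beta> \<delta> eps c _ h'] lh' e1 e2 e3 e4 e5
      by (rule dgen_cong[OF K0 mu])
  qed
qed

lemma run_sim:
  assumes eps: "eps > 0" and K0: "0 < K" and asK: "set as \<subseteq> {..<K}" and las: "length as = T"
    and t0: "t0 \<in> {1..T}"
    and rows: "\<forall>t\<in>{1..T}. t \<noteq> t0 \<longrightarrow> (\<forall>a<K. d t a = d' t a)"
  shows "n \<le> T \<Longrightarrow> length (run_hist K \<beta> \<delta> eps c d \<omega> n) = n \<Longrightarrow>
    map fst (run_hist K \<beta> \<delta> eps c d \<omega> n) = take n as \<Longrightarrow>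
    skel (run_hist K \<beta> \<delta> eps c d' (shiftw K eps as t0 d d' \<omega>) n) = skel (run_hist K \<beta> \<delta> eps c d \<omega> n)"
proof (induction n)
  case 0 then show ?case by simp
next
  case (Suc n)
  define h where "h = run_hist K \<beta> \<delta> eps c d \<omega> n"
  define \<omega>' where "\<omega>' = shiftw K eps as t0 d d' \<omega>"
  define h' where "h' = run_hist K \<beta> \<delta> eps c d' \<omega>' n"
  obtain i b where lhn: "length h = n" and dec: "decide K \<beta> \<delta> eps c \<omega> h = Pull i b"
    and hS: "run_hist K \<beta> \<delta> eps c d \<omega> (Suc n) = h @ [(i, d (n+1) i, b)]"
    using run_Suc[OF Suc.prems(2)] unfolding h_def by blast
  have "take n (map fst (run_hist K \<beta> \<delta> eps c d \<omega> (Suc n))) = take n (take (Suc n) as)"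
    using Suc.prems(3) by simp
  then have mf: "map fst h = take n as" using hS lhn by simp
  have IH: "skel h' = skel h" using Suc.IH Suc.prems lhn mf unfolding h_def h'_def \<omega>'_def by simp
  have lh': "length h' = n" using arg_cong[OF IH, of length] lhn by (simp add: skel_def)
  have rw: "\<forall>i<length h. fst (snd (h ! i)) = d (i+1) (fst (h ! i))"
    unfolding h_def using run_rew by blast
  have rw': "\<forall>i<length h'. fst (snd (h' ! i)) = d' (i+1) (fst (h' ! i))"
    unfolding h'_def using run_rew by blast
  have ini: "\<forall>i<length h. i < K \<longrightarrow> fst (h ! i) = i"
    unfolding h_def using run_init by blast
  have "decide K \<beta> \<delta> eps c \<omega>' h' = Pull i b"
    using decide_sim[OF eps K0 asK las t0 rows IH[symmetric], of \<beta> \<delta> c \<omega>] dec Suc.prems(1) lhn mf rw rw' ini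
    unfolding \<omega>'_def by simp
  then have h'S: "run_hist K \<beta> \<delta> eps c d' \<omega>' (Suc n) = h' @ [(i, d' (n+1) i, b)]"
    using lh' unfolding h'_def by (simp add: Let_def)
  show ?case unfolding \<omega>'_def[symmetric] h'S hS using IH by (simp add: skel_def)
qed

lemma event_sim:
  assumes eps: "eps > 0" and K0: "0 < K" and asK: "set as \<subseteq> {..<K}" and las: "length as = T"
    and t0: "t0 \<in> {1..T}"
    and rows: "\<forall>t\<in>{1..T}. t \<noteq> t0 \<longrightarrow> (\<forall>a<K. d t a = d' t a)"
    and E: "length (run_hist K \<beta> \<delta> eps c d \<omega> T) = T"
      "map fst (run_hist K \<beta> \<delta> eps c d \<omega> T) = as"
      "decide K \<beta> \<delta> eps c \<omega> (run_hist K \<beta> \<delta> eps c d \<omega> T) = Stop ahat"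
  shows "length (run_hist K \<beta> \<delta> eps c d' (shiftw K eps as t0 d d' \<omega>) T) = T \<and>
      map fst (run_hist K \<beta> \<delta> eps c d' (shiftw K eps as t0 d d' \<omega>) T) = as \<and>
      decide K \<beta> \<delta> eps c (shiftw K eps as t0 d d' \<omega>) (run_hist K \<beta> \<delta> eps c d' (shiftw K eps as t0 d d' \<omega>) T) = Stop ahat"
proof -
  define h where "h = run_hist K \<beta> \<delta> eps c d \<omega> T"
  define \<omega>' where "\<omega>' = shiftw K eps as t0 d d' \<omega>"
  define h' where "h' = run_hist K \<beta> \<delta> eps c d' \<omega>' T"
  have mf: "map fst h = take T as" using E las unfolding h_def by simp
  have sk: "skel h' = skel h"
    using run_sim[OF eps K0 asK las t0 rows, of T \<beta> \<delta> c \<omega>] E(1) mf unfolding h_def h'_def \<omega>'_def by simp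
  have lh': "length h' = T" using arg_cong[OF sk, of length] E(1) unfolding h_def by (simp add: skel_def)
  have mf': "map fst h' = as" using skel_map_fst[OF sk] E(2) unfolding h_def by simp
  have rw: "\<forall>i<length h. fst (snd (h ! i)) = d (i+1) (fst (h ! i))"
    unfolding h_def using run_rew by blast
  have rw': "\<forall>i<length h'. fst (snd (h' ! i)) = d' (i+1) (fst (h' ! i))"
    unfolding h'_def using run_rew by blast
  have ini: "\<forall>i<length h. i < K \<longrightarrow> fst (h ! i) = i"
    unfolding h_def using run_init by blast
  have "decide K \<beta> \<delta> eps c \<omega>' h' = Stop ahat"
    using decide_sim[OF eps K0 asK las t0 rows sk[symmetric], of \<beta> \<delta> c \<omega>] E(1,3) mf rw rw' ini
    unfolding \<omega>'_def h_def by simp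
  then show ?thesis using lh' mf' unfolding h'_def \<omega>'_def by simp
qed


definition lapd :: "real \<Rightarrow> real" where "lapd x = exp (- \<bar>x\<bar>) / 2"

lemma laplace1: "laplace 1 = density lborel (\<lambda>x. ennreal (lapd x))"
  unfolding laplace_def lapd_def by simp

lemma lapd_meas[measurable]: "lapd \<in> borel_measurable borel"
  unfolding lapd_def by measurable

lemma lapd_int: "(\<integral>\<^sup>+ x. ennreal (lapd x) \<partial>lborel) = 1"
proof -
  let ?e = "exponential_density 1"
  have e1: "(\<integral>\<^sup>+ x. ennreal (?e x) \<partial>lborel) = 1"
  proof -
    interpret prob_space "density lborel (\<lambda>x. ennreal (?e x))"
      using prob_space_exponential_density[of 1] by simp
    have "emeasure (density lborel (\<lambda>x. ennreal (?e x))) UNIV = 1"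
      using emeasure_space_1 by simp
    then show ?thesis by (simp add: emeasure_density)
  qed
  have em[measurable]: "(\<lambda>x. ennreal (?e x)) \<in> borel_measurable borel"
    by (simp add: exponential_density_def)
  have e2: "(\<integral>\<^sup>+ x. ennreal (?e (- x)) \<partial>lborel) = 1"
    using nn_integral_real_affine[OF em, of "-1" 0] e1 by simp
  have ae: "AE x in lborel. ennreal (lapd x) = ennreal (1/2) * (ennreal (?e x) + ennreal (?e (- x)))"
    using AE_lborel_singleton[of "0::real"]
  proof eventually_elim
    case (elim x)
    have "lapd x = (1/2) * (?e x + ?e (- x))"
      using elim unfolding lapd_def exponential_density_def by (cases "x < 0") auto
    have n1: "0 \<le> ?e x" "0 \<le> ?e (- x)" by (simp_all add: exponential_density_def)
    have "ennreal (lapd x) = ennreal ((1/2) * (?e x + ?e (- x)))" using \<open>lapd x = _\<close> by (rule arg_cong)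
    also have "\<dots> = ennreal (1/2) * ennreal (?e x + ?e (- x))"
      by (rule ennreal_mult) (use n1 in simp_all)
    also have "ennreal (?e x + ?e (- x)) = ennreal (?e x) + ennreal (?e (- x))"
      by (rule ennreal_plus) (use n1 in simp_all)
    finally show ?case .
  qed
  have "(\<integral>\<^sup>+ x. ennreal (lapd x) \<partial>lborel) =
        (\<integral>\<^sup>+ x. ennreal (1/2) * (ennreal (?e x) + ennreal (?e (- x))) \<partial>lborel)"
    by (rule nn_integral_cong_AE[OF ae])
  also have "\<dots> = ennreal (1/2) * ((\<integral>\<^sup>+ x. ennreal (?e x) \<partial>lborel) + (\<integral>\<^sup>+ x. ennreal (?e (- x)) \<partial>lborel))"
    by (simp add: nn_integral_cmult nn_integral_add exponential_density_def)
  also have "\<dots> = ennreal (1/2) * ennreal 2" unfolding e1 e2 by simp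
  also have "\<dots> = 1" by (subst ennreal_mult[symmetric]) simp_all
  finally show ?thesis .
qed

lemma laplace_prob: "prob_space (laplace 1)"
proof
  show "emeasure (laplace 1) (space (laplace 1)) = 1"
    unfolding laplace1 using lapd_int by (simp add: emeasure_density)
qed

lemma sets_laplace[simp]: "sets (laplace 1) = sets borel"
  unfolding laplace1 by simp

lemma space_laplace[simp]: "space (laplace 1) = UNIV"
  unfolding laplace1 by simp

lemma lapd_shift: "lapd (y - s) \<le> exp \<bar>s\<bar> * lapd y"
proof -
  have "- \<bar>y - s\<bar> \<le> \<bar>s\<bar> + - \<bar>y\<bar>" by linarith
  then have "exp (- \<bar>y - s\<bar>) \<le> exp (\<bar>s\<bar> + - \<bar>y\<bar>)" by simp
  then show ?thesis unfolding lapd_def exp_add by simp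
qed

lemma laplace_shift:
  assumes F[measurable]: "F \<in> borel_measurable borel"
  shows "(\<integral>\<^sup>+ x. F (x + s) \<partial>laplace 1) \<le> ennreal (exp \<bar>s\<bar>) * (\<integral>\<^sup>+ x. F x \<partial>laplace 1)"
proof -
  have "(\<integral>\<^sup>+ x. F (x + s) \<partial>laplace 1) = (\<integral>\<^sup>+ x. ennreal (lapd x) * F (x + s) \<partial>lborel)"
    unfolding laplace1 by (subst nn_integral_density) simp_all
  also have "\<dots> = (\<integral>\<^sup>+ y. ennreal (lapd (y - s)) * F y \<partial>lborel)"
  proof -
    have G[measurable]: "(\<lambda>y. ennreal (lapd (y - s)) * F y) \<in> borel_measurable borel" by measurable
    show ?thesis using nn_integral_real_affine[OF G, of 1 s] by (simp add: add.commute)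
  qed
  also have "\<dots> \<le> (\<integral>\<^sup>+ y. ennreal (exp \<bar>s\<bar>) * (ennreal (lapd y) * F y) \<partial>lborel)"
  proof (rule nn_integral_mono)
    fix y
    have "ennreal (lapd (y - s)) \<le> ennreal (exp \<bar>s\<bar>) * ennreal (lapd y)"
      using lapd_shift[of y s] by (simp add: ennreal_mult[symmetric] lapd_def)
    then have "ennreal (lapd (y - s)) * F y \<le> (ennreal (exp \<bar>s\<bar>) * ennreal (lapd y)) * F y"
      by (rule mult_right_mono) simp
    then show "ennreal (lapd (y - s)) * F y \<le> ennreal (exp \<bar>s\<bar>) * (ennreal (lapd y) * F y)"
      by (simp add: mult.assoc)
  qed
  also have "\<dots> = ennreal (exp \<bar>s\<bar>) * (\<integral>\<^sup>+ y. ennreal (lapd y) * F y \<partial>lborel)"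
    by (rule nn_integral_cmult) simp
  also have "(\<integral>\<^sup>+ y. ennreal (lapd y) * F y \<partial>lborel) = (\<integral>\<^sup>+ x. F x \<partial>laplace 1)"
    unfolding laplace1 by (subst nn_integral_density) simp_all
  finally show ?thesis .
qed


lemma space_noise[simp]: "space noise_space = UNIV"
  unfolding noise_space_def by (simp add: space_PiM PiE_UNIV_domain)

lemma noise_shift:
  fixes i0 :: "nat \<times> nat" and s :: real
  assumes A[measurable]: "A \<in> sets noise_space"
  shows "emeasure noise_space {\<omega> \<in> space noise_space. fun_upd \<omega> i0 (\<omega> i0 + s) \<in> A}
           \<le> ennreal (exp \<bar>s\<bar>) * emeasure noise_space A"
proof -
  define L where "L = laplace 1"
  define M where "M = (\<lambda>_::nat \<times> nat. L)"
  define I where "I = UNIV - {i0}"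
  define P where "P = PiM I M"
  interpret L: prob_space L unfolding L_def by (rule laplace_prob)
  interpret P: prob_space P unfolding P_def M_def by (rule prob_space_PiM) (rule L.prob_space_axioms)
  interpret LP: pair_prob_space L P by unfold_locales
  interpret PL: pair_prob_space P L by unfold_locales
  have NN: "noise_space = PiM UNIV M" unfolding noise_space_def M_def L_def ..
  have ins: "insert i0 I = UNIV" unfolding I_def by auto
  define g where "g = (\<lambda>z::real \<times> ((nat \<times> nat) \<Rightarrow> real). (snd z)(i0 := fst z))"
  have gm[measurable]: "g \<in> measurable (L \<Otimes>\<^sub>M P) noise_space"
    unfolding g_def NN
  proof (rule measurable_fun_upd[where J=I])
    show "UNIV = I \<union> {i0}" unfolding I_def by auto
    show "snd \<in> measurable (L \<Otimes>\<^sub>M P) (PiM I M)" unfolding P_def by (rule measurable_snd)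
    show "fst \<in> measurable (L \<Otimes>\<^sub>M P) (M i0)" unfolding M_def by (rule measurable_fst)
  qed
  have gm'[measurable]: "(\<lambda>z. g (snd z, fst z)) \<in> measurable (P \<Otimes>\<^sub>M L) noise_space"
    unfolding g_def NN
  proof (simp, rule measurable_fun_upd[where J=I])
    show "UNIV = I \<union> {i0}" unfolding I_def by auto
    show "fst \<in> measurable (P \<Otimes>\<^sub>M L) (PiM I M)" unfolding P_def by (rule measurable_fst)
    show "snd \<in> measurable (P \<Otimes>\<^sub>M L) (M i0)" unfolding M_def by (rule measurable_snd)
  qed
  have D: "distr (L \<Otimes>\<^sub>M P) noise_space g = noise_space"
  proof -
    have "distr (M i0 \<Otimes>\<^sub>M (\<Pi>\<^sub>M i\<in>I. M i)) (\<Pi>\<^sub>M i\<in>insert i0 I. M i) (\<lambda>(x, X). X(i0 := x)) =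
      (\<Pi>\<^sub>M i\<in>insert i0 I. M i)"
      by (rule distr_pair_PiM_eq_PiM) (simp_all add: M_def L.prob_space_axioms)
    moreover have "(\<lambda>(x, X). X(i0 := x)) = g" unfolding g_def by auto
    ultimately show ?thesis unfolding ins NN P_def by (simp add: M_def)
  qed
  have emB: "emeasure noise_space B = (\<integral>\<^sup>+ X. (\<integral>\<^sup>+ x. indicator B (g (x, X)) \<partial>L) \<partial>P)"
    if B[measurable]: "B \<in> sets noise_space" for B
  proof -
    have "emeasure noise_space B = (\<integral>\<^sup>+ \<omega>. indicator B \<omega> \<partial>noise_space)" by simp
    also have "\<dots> = (\<integral>\<^sup>+ \<omega>. indicator B \<omega> \<partial>distr (L \<Otimes>\<^sub>M P) noise_space g)" unfolding D ..
    also have "\<dots> = (\<integral>\<^sup>+ z. indicator B (g z) \<partial>(L \<Otimes>\<^sub>M P))"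
      by (rule nn_integral_distr) simp_all
    also have "\<dots> = (\<integral>\<^sup>+ X. (\<integral>\<^sup>+ x. indicator B (g (x, X)) \<partial>L) \<partial>P)"
      by (rule LP.nn_integral_snd[symmetric]) simp
    finally show ?thesis .
  qed
  define sh where "sh = (\<lambda>\<omega>::(nat \<times> nat) \<Rightarrow> real. fun_upd \<omega> i0 (\<omega> i0 + s))"
  have shm[measurable]: "sh \<in> measurable noise_space noise_space"
    unfolding sh_def NN
  proof (rule measurable_fun_upd[where J=UNIV])
    show "UNIV = UNIV \<union> {i0}" by auto
    show "(\<lambda>x. x) \<in> measurable (PiM UNIV M) (PiM UNIV M)" by simp
    have c: "(\<lambda>x. x i0) \<in> measurable (PiM UNIV M) (M i0)"
      by (rule measurable_component_singleton) simp
    then have c2[measurable]: "(\<lambda>x. x i0) \<in> borel_measurable (PiM UNIV M)"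
      unfolding M_def L_def by (simp add: measurable_cong_sets[OF refl sets_laplace])
    have "(\<lambda>x. x i0 + s) \<in> borel_measurable (PiM UNIV M)" by measurable
    then show "(\<lambda>x. x i0 + s) \<in> measurable (PiM UNIV M) (M i0)"
      unfolding M_def L_def by (simp add: measurable_cong_sets[OF refl sets_laplace])
  qed
  have B1: "{\<omega> \<in> space noise_space. sh \<omega> \<in> A} \<in> sets noise_space"
    using measurable_sets[OF shm A] by (simp add: vimage_def)
  have ind: "indicator {\<omega> \<in> space noise_space. sh \<omega> \<in> A} (g (x, X)) = (indicator A (g (x + s, X)) :: ennreal)"
    for x X
  proof -
    have "sh (g (x, X)) = g (x + s, X)" unfolding sh_def g_def by simp
    then show ?thesis by (simp add: indicator_def)
  qed
  have inner: "(\<integral>\<^sup>+ x. indicator A (g (x + s, X)) \<partial>L) \<le> ennreal (exp \<bar>s\<bar>) * (\<integral>\<^sup>+ x. indicator A (g (x, X)) \<partial>L)"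
    if X: "X \<in> space P" for X
  proof -
    have m1: "(\<lambda>x. g (x, X)) \<in> measurable L noise_space" by (rule measurable_Pair1[OF gm X])
    have "(\<lambda>x. indicator A (g (x, X)) :: ennreal) \<in> borel_measurable L"
      using measurable_comp[OF m1 borel_measurable_indicator[OF A]] by (simp add: comp_def)
    then have F: "(\<lambda>x. indicator A (g (x, X)) :: ennreal) \<in> borel_measurable borel"
      unfolding L_def by (simp add: measurable_cong_sets[OF sets_laplace refl])
    show ?thesis unfolding L_def by (rule laplace_shift[OF F])
  qed
  have "emeasure noise_space {\<omega> \<in> space noise_space. fun_upd \<omega> i0 (\<omega> i0 + s) \<in> A}
      = emeasure noise_space {\<omega> \<in> space noise_space. sh \<omega> \<in> A}" unfolding sh_def ..
  also have "\<dots> = (\<integral>\<^sup>+ X. (\<integral>\<^sup>+ x. indicator A (g (x + s, X)) \<partial>L) \<partial>P)"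
    unfolding emB[OF B1] ind ..
  also have "\<dots> \<le> (\<integral>\<^sup>+ X. ennreal (exp \<bar>s\<bar>) * (\<integral>\<^sup>+ x. indicator A (g (x, X)) \<partial>L) \<partial>P)"
    by (rule nn_integral_mono) (rule inner)
  also have "\<dots> = ennreal (exp \<bar>s\<bar>) * (\<integral>\<^sup>+ X. (\<integral>\<^sup>+ x. indicator A (g (x, X)) \<partial>L) \<partial>P)"
  proof (rule nn_integral_cmult)
    have "(\<lambda>z. indicator A (g (snd z, fst z)) :: ennreal) \<in> borel_measurable (P \<Otimes>\<^sub>M L)"
      using measurable_comp[OF gm' borel_measurable_indicator[OF A]] by (simp add: comp_def)
    then show "(\<lambda>X. \<integral>\<^sup>+ x. indicator A (g (x, X)) \<partial>L) \<in> borel_measurable P"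
      using L.borel_measurable_nn_integral_fst[of "\<lambda>z. indicator A (g (snd z, fst z))" P] by simp
  qed
  also have "\<dots> = ennreal (exp \<bar>s\<bar>) * emeasure noise_space A" unfolding emB[OF A] ..
  finally show ?thesis .
qed


lemma shift_meas: "(\<lambda>\<omega>. fun_upd \<omega> i0 (\<omega> i0 + s)) \<in> measurable noise_space noise_space"
proof -
  define M where "M = (\<lambda>_::nat \<times> nat. laplace 1)"
  have NN: "noise_space = PiM UNIV M" unfolding noise_space_def M_def ..
  show ?thesis unfolding NN
  proof (rule measurable_fun_upd[where J=UNIV])
    show "UNIV = UNIV \<union> {i0}" by auto
    show "(\<lambda>x. x) \<in> measurable (PiM UNIV M) (PiM UNIV M)" by simp
    have c: "(\<lambda>x. x i0) \<in> measurable (PiM UNIV M) (M i0)"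
      by (rule measurable_component_singleton) simp
    then have c2[measurable]: "(\<lambda>x. x i0) \<in> borel_measurable (PiM UNIV M)"
      unfolding M_def by (simp add: measurable_cong_sets[OF refl sets_laplace])
    have "(\<lambda>x. x i0 + s) \<in> borel_measurable (PiM UNIV M)" by measurable
    then show "(\<lambda>x. x i0 + s) \<in> measurable (PiM UNIV M) (M i0)"
      unfolding M_def by (simp add: measurable_cong_sets[OF refl sets_laplace])
  qed
qed

lemma shiftw_eq: "shiftw K eps as t0 d d' \<omega> =
   fun_upd \<omega> (k0_of K as t0, as ! (t0 - 1)) (\<omega> (k0_of K as t0, as ! (t0 - 1)) + eps * (d t0 (as ! (t0 - 1)) - d' t0 (as ! (t0 - 1))))"
  unfolding shiftw_def ..

lemma shiftw_inv: "shiftw K eps as t0 d' d (shiftw K eps as t0 d d' \<omega>) = \<omega>"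
  unfolding shiftw_def by (rule ext) (simp add: algebra_simps)

definition Ev where
  "Ev K \<beta> \<delta> eps c d T as ahat = {\<omega> \<in> space noise_space.
          let h = run_hist K \<beta> \<delta> eps c d \<omega> T in
          length h = T \<and> map fst h = as \<and> decide K \<beta> \<delta> eps c \<omega> h = Stop ahat}"

lemma Ev_eq:
  assumes eps: "eps > 0" and K0: "0 < K" and asK: "set as \<subseteq> {..<K}" and las: "length as = T"
    and t0: "t0 \<in> {1..T}"
    and rows: "\<forall>t\<in>{1..T}. t \<noteq> t0 \<longrightarrow> (\<forall>a<K. d t a = d' t a)"
  shows "Ev K \<beta> \<delta> eps c d T as ahat =
    {\<omega> \<in> space noise_space. shiftw K eps as t0 d d' \<omega> \<in> Ev K \<beta> \<delta> eps c d' T as ahat}"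
proof -
  have rows': "\<forall>t\<in>{1..T}. t \<noteq> t0 \<longrightarrow> (\<forall>a<K. d' t a = d t a)" using rows by auto
  show ?thesis
  proof (intro set_eqI iffI)
    fix \<omega> assume "\<omega> \<in> Ev K \<beta> \<delta> eps c d T as ahat"
    then show "\<omega> \<in> {\<omega> \<in> space noise_space. shiftw K eps as t0 d d' \<omega> \<in> Ev K \<beta> \<delta> eps c d' T as ahat}"
      using event_sim[OF eps K0 asK las t0 rows, of \<beta> \<delta> c \<omega> ahat] unfolding Ev_def by (simp add: Let_def)
  next
    fix \<omega> assume "\<omega> \<in> {\<omega> \<in> space noise_space. shiftw K eps as t0 d d' \<omega> \<in> Ev K \<beta> \<delta> eps c d' T as ahat}"
    then show "\<omega> \<in> Ev K \<beta> \<delta> eps c d T as ahat"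
      using event_sim[OF eps K0 asK las t0 rows', of \<beta> \<delta> c "shiftw K eps as t0 d d' \<omega>" ahat]
      unfolding Ev_def shiftw_inv by (simp add: Let_def)
  qed
qed

theorem theorem3:
  fixes K :: nat and \<epsilon> \<beta> \<delta> :: real
    and c :: "real \<Rightarrow> nat \<Rightarrow> nat \<Rightarrow> nat \<Rightarrow> nat \<Rightarrow> real \<Rightarrow> real"
    and T :: nat and d d' :: "nat \<Rightarrow> nat \<Rightarrow> real"
    and as :: "nat list" and ahat :: nat
  assumes "\<epsilon> > 0" and "0 < \<beta>" and "\<beta> < 1" and "0 < \<delta>" and "\<delta> < 1"
    and "\<forall>k1 k2 n1 n2 x. 0 < x \<and> x < 1 \<longrightarrow> c \<epsilon> k1 k2 n1 n2 x \<ge> 0"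
    and "\<forall>t\<in>{1..T}. \<forall>a<K. d t a \<in> {0..1}"
    and "\<forall>t\<in>{1..T}. \<forall>a<K. d' t a \<in> {0..1}"
    and "\<exists>t0\<in>{1..T}. (\<exists>a<K. d t0 a \<noteq> d' t0 a) \<and>
           (\<forall>t\<in>{1..T}. t \<noteq> t0 \<longrightarrow> (\<forall>a<K. d t a = d' t a))"
    and "length as = T" and "set as \<subseteq> {..<K}" and "ahat < K"
  shows "adap_pi K \<beta> \<delta> \<epsilon> c d T as ahat \<le> exp \<epsilon> * adap_pi K \<beta> \<delta> \<epsilon> c d' T as ahat"
proof -
  note eps = assms(1) and las = assms(10) and asK = assms(11)
  have K0: "0 < K" using assms(12) by simp
  obtain t0 where t0: "t0 \<in> {1..T}" and rows: "\<forall>t\<in>{1..T}. t \<noteq> t0 \<longrightarrow> (\<forall>a<K. d t a = d' t a)"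
    using assms(9) by blast
  have rows': "\<forall>t\<in>{1..T}. t \<noteq> t0 \<longrightarrow> (\<forall>a<K. d' t a = d t a)" using rows by auto
  define a0 where "a0 = as ! (t0 - 1)"
  define i0 where "i0 = (k0_of K as t0, a0)"
  define s where "s = \<epsilon> * (d t0 a0 - d' t0 a0)"
  have a0K: "a0 < K"
  proof -
    have "t0 - 1 < length as" using t0 las by auto
    then have "a0 \<in> set as" unfolding a0_def by simp
    then show ?thesis using asK by auto
  qed
  have "d t0 a0 \<in> {0..1}" "d' t0 a0 \<in> {0..1}" using assms(7,8) t0 a0K by auto
  then have "\<bar>d t0 a0 - d' t0 a0\<bar> \<le> 1" by auto
  then have sabs: "\<bar>s\<bar> \<le> \<epsilon>" unfolding s_def using eps
    by (simp add: abs_mult)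
  have sw: "shiftw K \<epsilon> as t0 d d' = (\<lambda>\<omega>. fun_upd \<omega> i0 (\<omega> i0 + s))"
    unfolding shiftw_eq i0_def s_def a0_def by (rule ext) (rule refl)
  have sw': "shiftw K \<epsilon> as t0 d' d = (\<lambda>\<omega>. fun_upd \<omega> i0 (\<omega> i0 + (- s)))"
    unfolding shiftw_eq i0_def s_def a0_def by (rule ext) (simp add: algebra_simps)
  define Ed where "Ed = Ev K \<beta> \<delta> \<epsilon> c d T as ahat"
  define Ed' where "Ed' = Ev K \<beta> \<delta> \<epsilon> c d' T as ahat"
  have E1: "Ed = {\<omega> \<in> space noise_space. fun_upd \<omega> i0 (\<omega> i0 + s) \<in> Ed'}"
    unfolding Ed_def Ed'_def using Ev_eq[OF eps K0 asK las t0 rows, of \<beta> \<delta> c ahat] sw by simp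
  have E2: "Ed' = {\<omega> \<in> space noise_space. fun_upd \<omega> i0 (\<omega> i0 + (- s)) \<in> Ed}"
    unfolding Ed_def Ed'_def using Ev_eq[OF eps K0 asK las t0 rows', of \<beta> \<delta> c ahat] sw' by simp
  have pi1: "adap_pi K \<beta> \<delta> \<epsilon> c d T as ahat = measure noise_space Ed"
    unfolding adap_pi_def Ed_def Ev_def ..
  have pi2: "adap_pi K \<beta> \<delta> \<epsilon> c d' T as ahat = measure noise_space Ed'"
    unfolding adap_pi_def Ed'_def Ev_def ..
  interpret N: prob_space noise_space
    unfolding noise_space_def by (rule prob_space_PiM) (rule laplace_prob)
  show ?thesis
  proof (cases "Ed' \<in> sets noise_space")
    case True
    have "emeasure noise_space Ed \<le> ennreal (exp \<bar>s\<bar>) * emeasure noise_space Ed'"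
      unfolding E1 by (rule noise_shift[OF True])
    then have "ennreal (measure noise_space Ed) \<le> ennreal (exp \<bar>s\<bar> * measure noise_space Ed')"
      by (simp add: N.emeasure_eq_measure ennreal_mult)
    then have "measure noise_space Ed \<le> exp \<bar>s\<bar> * measure noise_space Ed'"
      by (subst (asm) ennreal_le_iff) simp_all
    also have "\<dots> \<le> exp \<epsilon> * measure noise_space Ed'"
      using sabs by (intro mult_right_mono) simp_all
    finally show ?thesis unfolding pi1 pi2 .
  next
    case False
    have "Ed \<notin> sets noise_space"
    proof
      assume "Ed \<in> sets noise_space"
      then have "{\<omega> \<in> space noise_space. fun_upd \<omega> i0 (\<omega> i0 + (- s)) \<in> Ed} \<in> sets noise_space"
        using measurable_sets[OF shift_meas[of i0 "- s"]] by (simp add: vimage_def)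
      then show False using False E2 by simp
    qed
    then show ?thesis unfolding pi1 pi2 using False by (simp add: measure_notin_sets)
  qed
qed

end
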